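(* For every $n \ge 1$, the $\mathbb{Z}$-discriminating complexity of $\mathbb{Z}^n$ is asymptotically equivalent to a polynomial of degree $n-1$, i.e. $C_{\mathbb{Z}^n}^{\mathbb{Z}} \approx (R \mapsto R^{n-1})$.
   Context: A group $G$ is fully residually $H$ if for every finite set $S \subseteq G-\{1\}$ there is a homomorphism $\phi: G \to H$ with $1 \notin \phi(S)$ ($\phi$ discriminates $S$). For finite generating sets $X$ of $G$ and $Y$ of $H$, the complexity of $\phi: G\to H$ is $|\phi|_X^Y := \max_{x \in X} |\phi(x)|_Y$. The $H$-discriminating complexity is $C_{G,X}^{H,Y}(R) := \min\{|\phi|_X^Y : \phi \text{ discriminates } B_R(G,X)-\{1\}\}$, $B_R(G,X)$ being the closed ball of radius $R$ about $1$ in the word metric. For $f,g:\mathbb{N}\to\mathbb{N}$, $f \preceq g$ means there is $K$ with $f(R) \le K g(KR)+K$ for all $R$, and $f\approx g$ means $f \preceq g$ and $g\preceq f$. The $\approx$-class of $C_{G,X}^{H,Y}$ is independent of $X,Y$ and is denoted $C_G^H$. *)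

theory Defs
  imports Main
begin

text \<open>The free abelian group Z^n, realised as integer vectors indexed by {0..<n}
  (functions nat => int vanishing outside {..<n}), with group operation +.\<close>
definition Zn :: "nat \<Rightarrow> (nat \<Rightarrow> int) set" where
  "Zn n = {v. \<forall>i\<ge>n. v i = 0}"

definition std_basis :: "nat \<Rightarrow> nat \<Rightarrow> int" where
  "std_basis i = (\<lambda>j. if j = i then 1 else 0)"

definition word_len_Zn :: "nat \<Rightarrow> (nat \<Rightarrow> int) \<Rightarrow> nat" where
  "word_len_Zn n v = (\<Sum>i<n. nat \<bar>v i\<bar>)"

definition word_len_Z :: "int \<Rightarrow> nat" where
  "word_len_Z k = nat \<bar>k\<bar>"

text \<open>Group homomorphisms Z^n -> Z (only their values on Zn n matter).\<close>
definition is_hom_Zn_Z :: "nat \<Rightarrow> ((nat \<Rightarrow> int) \<Rightarrow> int) \<Rightarrow> bool" where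
  "is_hom_Zn_Z n \<phi> \<longleftrightarrow> (\<forall>u\<in>Zn n. \<forall>v\<in>Zn n. \<phi> (\<lambda>i. u i + v i) = \<phi> u + \<phi> v)"

definition discriminates_ball :: "nat \<Rightarrow> ((nat \<Rightarrow> int) \<Rightarrow> int) \<Rightarrow> nat \<Rightarrow> bool" where
  "discriminates_ball n \<phi> R \<longleftrightarrow>
     (\<forall>v\<in>Zn n. v \<noteq> (\<lambda>_. 0) \<and> word_len_Zn n v \<le> R \<longrightarrow> \<phi> v \<noteq> 0)"

definition hom_complexity :: "nat \<Rightarrow> ((nat \<Rightarrow> int) \<Rightarrow> int) \<Rightarrow> nat" where
  "hom_complexity n \<phi> = Max ((\<lambda>i. word_len_Z (\<phi> (std_basis i))) ` {..<n})"

definition disc_complexity :: "nat \<Rightarrow> nat \<Rightarrow> nat" where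
  "disc_complexity n R = (LEAST c. \<exists>\<phi>. is_hom_Zn_Z n \<phi> \<and> discriminates_ball n \<phi> R
                                        \<and> hom_complexity n \<phi> = c)"

definition asymp_le :: "(nat \<Rightarrow> nat) \<Rightarrow> (nat \<Rightarrow> nat) \<Rightarrow> bool" where
  "asymp_le f g \<longleftrightarrow> (\<exists>K. \<forall>R. f R \<le> K * g (K * R) + K)"

definition asymp_equiv :: "(nat \<Rightarrow> nat) \<Rightarrow> (nat \<Rightarrow> nat) \<Rightarrow> bool" where
  "asymp_equiv f g \<longleftrightarrow> asymp_le f g \<and> asymp_le g f"

end

theory Submission
  imports Defs "HOL-Library.FuncSet"
begin

lemma natR1: "nat (int R + 1) = R + 1" by simp
lemma natR2: "nat (int R + 1) = Suc R" by simp

lemma zero_Zn: "(\<lambda>_. 0::int) \<in> Zn n" by (simp add: Zn_def)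

lemma partial_sum_bound:
  fixes B :: int and R :: nat
  assumes "B = int R + 1" "\<forall>i<k. \<bar>v i\<bar> \<le> int R"
  shows "\<bar>\<Sum>i<k. v i * B ^ i\<bar> \<le> B ^ k - 1"
  using assms(2)
proof (induction k)
  case 0 then show ?case by simp
next
  case (Suc k)
  have "\<bar>\<Sum>i<Suc k. v i * B ^ i\<bar> \<le> \<bar>\<Sum>i<k. v i * B ^ i\<bar> + \<bar>v k\<bar> * B ^ k"
  proof -
    have "B ^ k \<ge> 0" using assms(1) by simp
    then have "\<bar>v k * B ^ k\<bar> = \<bar>v k\<bar> * B ^ k" by (simp add: abs_mult)
    moreover have "\<bar>\<Sum>i<Suc k. v i * B ^ i\<bar> \<le> \<bar>\<Sum>i<k. v i * B ^ i\<bar> + \<bar>v k * B ^ k\<bar>"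
      by (simp only: sum.lessThan_Suc abs_triangle_ineq)
    ultimately show ?thesis by simp
  qed
  also have "\<dots> \<le> (B ^ k - 1) + int R * B ^ k"
    using Suc assms(1) by (intro add_mono mult_right_mono) auto
  also have "\<dots> = B ^ Suc k - 1" using assms(1) by (simp add: algebra_simps)
  finally show ?case .
qed

lemma sum_zero_imp:
  fixes B :: int and R :: nat
  assumes "B = int R + 1" "\<forall>i<k. \<bar>v i\<bar> \<le> int R" "(\<Sum>i<k. v i * B ^ i) = 0"
  shows "\<forall>i<k. v i = 0"
  using assms(2,3)
proof (induction k)
  case 0 then show ?case by simp
next
  case (Suc k)
  have b: "\<bar>\<Sum>i<k. v i * B ^ i\<bar> \<le> B ^ k - 1"
    using partial_sum_bound[OF assms(1)] Suc.prems by auto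
  have vk: "v k = 0"
  proof (rule ccontr)
    assume "v k \<noteq> 0"
    hence "1 \<le> \<bar>v k\<bar>" by simp
    have Bp: "B ^ k > 0" using assms(1) by simp
    have "(\<Sum>i<k. v i * B ^ i) = - (v k * B ^ k)" using Suc.prems(2) by simp
    hence "\<bar>\<Sum>i<k. v i * B ^ i\<bar> = \<bar>v k\<bar> * B ^ k" using Bp by (simp add: abs_mult)
    also have "\<dots> \<ge> B ^ k" using \<open>1 \<le> \<bar>v k\<bar>\<close> Bp by simp
    finally show False using b by simp
  qed
  have "(\<Sum>i<k. v i * B ^ i) = 0" using Suc.prems(2) vk by simp
  moreover have "\<forall>i<k. \<bar>v i\<bar> \<le> int R" using Suc.prems(1) by simp
  ultimately have "\<forall>i<k. v i = 0" using Suc.IH by blast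
  with vk show ?case by (simp add: less_Suc_eq)
qed

definition phiB :: "nat \<Rightarrow> nat \<Rightarrow> (nat \<Rightarrow> int) \<Rightarrow> int" where
  "phiB n R v = (\<Sum>i<n. v i * (int R + 1) ^ i)"

lemma phiB_hom: "is_hom_Zn_Z n (phiB n R)"
  by (simp add: is_hom_Zn_Z_def phiB_def algebra_simps sum.distrib)

lemma phiB_disc: "discriminates_ball n (phiB n R) R"
  unfolding discriminates_ball_def
proof (intro ballI impI)
  fix v assume v: "v \<in> Zn n" and h: "v \<noteq> (\<lambda>_. 0) \<and> word_len_Zn n v \<le> R"
  have bnd: "\<forall>i<n. \<bar>v i\<bar> \<le> int R"
  proof (intro allI impI)
    fix i assume "i < n"
    have "nat \<bar>v i\<bar> \<le> (\<Sum>j<n. nat \<bar>v j\<bar>)"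
      using \<open>i<n\<close> by (intro member_le_sum) auto
    with h show "\<bar>v i\<bar> \<le> int R" unfolding word_len_Zn_def by linarith
  qed
  show "phiB n R v \<noteq> 0"
  proof
    assume "phiB n R v = 0"
    hence "\<forall>i<n. v i = 0" using sum_zero_imp[OF refl bnd] by (simp add: phiB_def)
    moreover have "\<forall>i\<ge>n. v i = 0" using v by (simp add: Zn_def)
    ultimately have "v = (\<lambda>_. 0)" by (auto simp: fun_eq_iff not_le[symmetric])
    with h show False by simp
  qed
qed

lemma phiB_basis: "i < n \<Longrightarrow> phiB n R (std_basis i) = (int R + 1) ^ i"
proof -
  assume i: "i < n"
  have "phiB n R (std_basis i) = (\<Sum>j<n. if j = i then (int R + 1) ^ j else 0)"
    unfolding phiB_def std_basis_def by (intro sum.cong) auto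
  also have "\<dots> = (int R + 1) ^ i" using i by (simp add: sum.delta)
  finally show ?thesis .
qed

lemma phiB_cx: assumes "n \<ge> 1" shows "hom_complexity n (phiB n R) = (R + 1) ^ (n - 1)"
  unfolding hom_complexity_def
proof (rule Max_eqI)
  show "finite ((\<lambda>i. word_len_Z (phiB n R (std_basis i))) ` {..<n})" by simp
next
  fix y assume "y \<in> (\<lambda>i. word_len_Z (phiB n R (std_basis i))) ` {..<n}"
  then obtain i where i: "i < n" "y = word_len_Z (phiB n R (std_basis i))" by auto
  hence "y = (R+1)^i" by (simp add: phiB_basis word_len_Z_def nat_power_eq natR1)
  moreover have "(R+1)^i \<le> (R + 1) ^ (n - 1)" using i by (intro power_increasing) auto
  ultimately show "y \<le> (R + 1) ^ (n - 1)" by simp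
next
  show "(R + 1) ^ (n - 1) \<in> (\<lambda>i. word_len_Z (phiB n R (std_basis i))) ` {..<n}"
    using assms by (intro image_eqI[where x="n-1"]) (auto simp: phiB_basis word_len_Z_def nat_power_eq natR1)
qed

lemma ex_disc: assumes "n \<ge> 1"
  shows "\<exists>\<phi>. is_hom_Zn_Z n \<phi> \<and> discriminates_ball n \<phi> R \<and> hom_complexity n \<phi> = (R+1)^(n-1)"
  using phiB_hom phiB_disc phiB_cx[OF assms] by blast

lemma upper: assumes "n \<ge> 1" shows "disc_complexity n R \<le> (R+1)^(n-1)"
  unfolding disc_complexity_def by (rule Least_le) (rule ex_disc[OF assms])

lemma hom_zero: assumes "is_hom_Zn_Z n \<phi>" shows "\<phi> (\<lambda>_. 0) = 0"
proof -
  have "\<phi> (\<lambda>i. (\<lambda>_. 0::int) i + (\<lambda>_. 0::int) i) = \<phi> (\<lambda>_. 0) + \<phi> (\<lambda>_. 0)"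
    using assms[unfolded is_hom_Zn_Z_def, rule_format, OF zero_Zn zero_Zn] .
  then show ?thesis by simp
qed

lemma std_basis_Zn: "i < n \<Longrightarrow> std_basis i \<in> Zn n"
  by (simp add: Zn_def std_basis_def)

lemma hom_bound:
  assumes hom: "is_hom_Zn_Z n \<phi>" and cb: "\<forall>i<n. \<bar>\<phi> (std_basis i)\<bar> \<le> int c"
  shows "\<forall>v. v \<in> Zn n \<longrightarrow> (\<forall>i. v i \<ge> 0) \<longrightarrow> (\<Sum>i<n. v i) = int m
           \<longrightarrow> \<bar>\<phi> v\<bar> \<le> int c * int m"
proof (induction m)
  case 0
  show ?case
  proof (intro allI impI)
    fix v :: "nat \<Rightarrow> int" assume v: "v \<in> Zn n" "\<forall>i. v i \<ge> 0" "(\<Sum>i<n. v i) = int 0"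
    have "\<forall>i<n. v i = 0" using v(2,3) sum_nonneg_eq_0_iff[of "{..<n}" v] by auto
    with v(1) have "v = (\<lambda>_. 0)" by (auto simp: Zn_def fun_eq_iff not_le[symmetric])
    then show "\<bar>\<phi> v\<bar> \<le> int c * int 0" using hom_zero[OF hom] by simp
  qed
next
  case (Suc m)
  show ?case
  proof (intro allI impI)
    fix v :: "nat \<Rightarrow> int" assume v: "v \<in> Zn n" "\<forall>i. v i \<ge> 0" "(\<Sum>i<n. v i) = int (Suc m)"
    have "\<exists>i<n. v i > 0"
    proof (rule ccontr)
      assume "\<not> (\<exists>i<n. v i > 0)"
      hence "\<forall>i<n. v i = 0" using v(2) by (meson antisym not_le)
      hence "(\<Sum>i<n. v i) = 0" by simp
      with v(3) show False by simp
    qed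
    then obtain i where i: "i < n" "v i > 0" by blast
    define w where "w = (\<lambda>j. v j - std_basis i j)"
    have wZ: "w \<in> Zn n" using v(1) i(1) by (simp add: w_def Zn_def std_basis_def)
    have wnn: "\<forall>j. w j \<ge> 0" using v(2) i(2) by (simp add: w_def std_basis_def)
    have "(\<Sum>j<n. w j) = (\<Sum>j<n. v j) - (\<Sum>j<n. std_basis i j)"
      by (simp add: w_def sum_subtractf)
    also have "(\<Sum>j<n. std_basis i j) = 1" using i(1) by (simp add: std_basis_def)
    finally have ws: "(\<Sum>j<n. w j) = int m" using v(3) by simp
    have "\<bar>\<phi> w\<bar> \<le> int c * int m" using Suc.IH wZ wnn ws by blast
    have vw: "v = (\<lambda>j. w j + std_basis i j)" by (simp add: w_def)
    have "\<phi> (\<lambda>j. w j + std_basis i j) = \<phi> w + \<phi> (std_basis i)"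
      using hom[unfolded is_hom_Zn_Z_def, rule_format, OF wZ std_basis_Zn[OF i(1)]] .
    hence "\<phi> v = \<phi> w + \<phi> (std_basis i)" using vw by simp
    hence "\<bar>\<phi> v\<bar> \<le> \<bar>\<phi> w\<bar> + \<bar>\<phi> (std_basis i)\<bar>" by simp
    also have "\<dots> \<le> int c * int m + int c" using \<open>\<bar>\<phi> w\<bar> \<le> int c * int m\<close> cb i(1) by (simp add: add_mono)
    finally show "\<bar>\<phi> v\<bar> \<le> int c * int (Suc m)" by (simp add: algebra_simps)
  qed
qed

lemma counting:
  assumes n: "n \<ge> 1" and hom: "is_hom_Zn_Z n \<phi>" and disc: "discriminates_ball n \<phi> M"
    and M: "n * R \<le> M"
  shows "(R+1)^n \<le> 2 * hom_complexity n \<phi> * n * R + 1"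
proof -
  define c where "c = hom_complexity n \<phi>"
  have cb: "\<forall>i<n. \<bar>\<phi> (std_basis i)\<bar> \<le> int c"
  proof (intro allI impI)
    fix i assume "i < n"
    hence "word_len_Z (\<phi> (std_basis i)) \<le> c" unfolding c_def hom_complexity_def
      by (intro Max_ge) auto
    then show "\<bar>\<phi> (std_basis i)\<bar> \<le> int c" by (simp add: word_len_Z_def)
  qed
  define P where "P = PiE {..<n} (\<lambda>_. {0..int R})"
  define ext where "ext = (\<lambda>(f::nat\<Rightarrow>int) i. if i < n then f i else 0)"
  define A where "A = ext ` P"
  have injext: "inj_on ext P"
  proof (rule inj_onI)
    fix f g assume fg: "f \<in> P" "g \<in> P" "ext f = ext g"
    show "f = g"
    proof (rule PiE_ext[OF fg(1)[unfolded P_def] fg(2)[unfolded P_def]])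
      fix i assume "i \<in> {..<n}"
      then show "f i = g i" using fun_cong[OF fg(3), of i] by (simp add: ext_def)
    qed
  qed
  have cardA: "card A = (R+1)^n"
    unfolding A_def using injext by (simp add: card_image P_def card_PiE natR2)
  have Aprop: "\<And>v. v \<in> A \<Longrightarrow> v \<in> Zn n \<and> (\<forall>i. 0 \<le> v i \<and> v i \<le> int R)"
  proof -
    fix v assume "v \<in> A"
    then obtain f where f: "f \<in> P" "v = ext f" unfolding A_def by blast
    have fr: "\<forall>i<n. f i \<in> {0..int R}" using f(1) unfolding P_def by (simp add: PiE_iff)
    have "v \<in> Zn n" unfolding f(2) ext_def Zn_def by simp
    moreover have "\<forall>i. 0 \<le> v i \<and> v i \<le> int R"
    proof
      fix i show "0 \<le> v i \<and> v i \<le> int R"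
        using fr unfolding f(2) ext_def by (cases "i < n") auto
    qed
    ultimately show "v \<in> Zn n \<and> (\<forall>i. 0 \<le> v i \<and> v i \<le> int R)" by blast
  qed
  define N where "N = int c * int (n * R)"
  have imgA: "\<phi> ` A \<subseteq> {-N..N}"
  proof
    fix y assume "y \<in> \<phi> ` A"
    then obtain v where v: "v \<in> A" "y = \<phi> v" by blast
    have vp: "v \<in> Zn n" "\<forall>i. 0 \<le> v i \<and> v i \<le> int R" using Aprop[OF v(1)] by auto
    have s0: "(\<Sum>i<n. v i) \<ge> 0" using vp(2) by (simp add: sum_nonneg)
    have s1: "(\<Sum>i<n. v i) \<le> int (n * R)"
    proof -
      have "(\<Sum>i<n. v i) \<le> (\<Sum>i<n. int R)" using vp(2) by (intro sum_mono) auto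
      then show ?thesis by simp
    qed
    obtain m where m: "(\<Sum>i<n. v i) = int m" using s0 by (metis nonneg_eq_int)
    have "\<bar>\<phi> v\<bar> \<le> int c * int m" using hom_bound[OF hom cb, of m] vp m by blast
    also have "\<dots> \<le> N" unfolding N_def using m s1 by (intro mult_left_mono) auto
    finally show "y \<in> {-N..N}" using v by auto
  qed
  have injphi: "inj_on \<phi> A"
  proof (rule inj_onI, rule ccontr)
    fix u w assume uw: "u \<in> A" "w \<in> A" "\<phi> u = \<phi> w" "u \<noteq> w"
    define d where "d = (\<lambda>i. u i - w i)"
    have up: "u \<in> Zn n" "\<forall>i. 0 \<le> u i \<and> u i \<le> int R" using Aprop[OF uw(1)] by auto
    have wp: "w \<in> Zn n" "\<forall>i. 0 \<le> w i \<and> w i \<le> int R" using Aprop[OF uw(2)] by auto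
    have dZ: "d \<in> Zn n" using up(1) wp(1) by (simp add: Zn_def d_def)
    have dnz: "d \<noteq> (\<lambda>_. 0)" using uw(4) by (auto simp: d_def fun_eq_iff)
    have "word_len_Zn n d \<le> (\<Sum>i<n. R)" unfolding word_len_Zn_def
    proof (intro sum_mono)
      fix i assume "i \<in> {..<n}"
      have "0 \<le> u i" "u i \<le> int R" "0 \<le> w i" "w i \<le> int R" using up(2) wp(2) by auto
      then have "\<bar>d i\<bar> \<le> int R" unfolding d_def by linarith
      then show "nat \<bar>d i\<bar> \<le> R" by simp
    qed
    hence "word_len_Zn n d \<le> M" using M by (simp add: mult.commute)
    hence "\<phi> d \<noteq> 0" using disc dZ dnz unfolding discriminates_ball_def by blast
    have "u = (\<lambda>i. d i + w i)" by (simp add: d_def)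
    moreover have "\<phi> (\<lambda>i. d i + w i) = \<phi> d + \<phi> w"
      using hom[unfolded is_hom_Zn_Z_def, rule_format, OF dZ wp(1)] .
    ultimately have "\<phi> u = \<phi> d + \<phi> w" by simp
    with uw(3) \<open>\<phi> d \<noteq> 0\<close> show False by simp
  qed
  have "card A \<le> card {-N..N}"
    by (rule card_inj_on_le[OF injphi imgA]) simp
  also have "card {-N..N} = nat (2 * N + 1)" by simp
  also have "\<dots> = 2 * c * n * R + 1" unfolding N_def by (simp add: nat_add_distrib nat_mult_distrib)
  finally show ?thesis using cardA c_def by simp
qed

lemma pow_ge: "n \<ge> 1 \<Longrightarrow> R ^ (n-1) * R + 1 \<le> (R+1::nat)^n"
proof -
  assume "n \<ge> 1"
  then have e: "(R+1)^n = (R+1)^(n-1) * R + (R+1)^(n-1)"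
  proof -
    assume "n \<ge> 1"
    then obtain k where k: "n = Suc k" by (cases n) auto
    show ?thesis unfolding k by (simp add: algebra_simps)
  qed
  have "R^(n-1) * R \<le> (R+1)^(n-1) * R" by (intro mult_right_mono power_mono) auto
  moreover have "1 \<le> (R+1::nat)^(n-1)" by simp
  ultimately show ?thesis using e by linarith
qed

lemma lower: assumes n: "n \<ge> 1"
  shows "R ^ (n-1) \<le> 2 * n * disc_complexity n (2 * n * R) + 2 * n"
proof -
  let ?M = "2 * n * R"
  let ?Q = "\<lambda>c. \<exists>\<phi>. is_hom_Zn_Z n \<phi> \<and> discriminates_ball n \<phi> ?M \<and> hom_complexity n \<phi> = c"
  have "?Q (disc_complexity n ?M)"
    unfolding disc_complexity_def by (rule LeastI_ex) (use ex_disc[OF n] in blast)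
  then obtain \<phi> where \<phi>: "is_hom_Zn_Z n \<phi>" "discriminates_ball n \<phi> ?M"
    "hom_complexity n \<phi> = disc_complexity n ?M" by blast
  define c where "c = disc_complexity n ?M"
  have "(R+1)^n \<le> 2 * c * n * R + 1"
    using counting[OF n \<phi>(1,2), of R] \<phi>(3) c_def by simp
  with pow_ge[OF n, of R] have key: "R^(n-1) * R \<le> (2 * c * n) * R" by linarith
  show ?thesis
  proof (cases "R = 0")
    case True
    then show ?thesis using n by (cases "n - 1") auto
  next
    case False
    then have "R^(n-1) \<le> 2 * c * n" using key by (simp add: mult_le_cancel2)
    then show ?thesis unfolding c_def by (simp add: mult.commute mult.left_commute)
  qed
qed

theorem theoremB:
  fixes n :: nat
  assumes "n \<ge> 1"
  shows "asymp_equiv (disc_complexity n) (\<lambda>R. R ^ (n - 1))"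
  unfolding asymp_equiv_def asymp_le_def
proof (intro conjI)
  show "\<exists>K. \<forall>R. disc_complexity n R \<le> K * (K * R) ^ (n - 1) + K"
  proof (intro exI allI)
    fix R
    have "disc_complexity n R \<le> (R+1)^(n-1)" by (rule upper[OF assms])
    also have "\<dots> \<le> 2 * (2 * R) ^ (n - 1) + 2"
    proof (cases "R = 0")
      case True then show ?thesis by simp
    next
      case False
      then have "(R+1)^(n-1) \<le> (2*R)^(n-1)" by (intro power_mono) auto
      then show ?thesis by simp
    qed
    finally show "disc_complexity n R \<le> 2 * (2 * R) ^ (n - 1) + 2" .
  qed
next
  show "\<exists>K. \<forall>R. R ^ (n - 1) \<le> K * disc_complexity n (K * R) + K"
    using lower[OF assms] by blast
qed

end
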